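(* Let $p$ be a prime and let $\mathcal{C}\subseteq\mathbb{F}_p^{N'}$ be a linear $b$-quasi-cyclic code of dimension $K$ with a systematic generator matrix, where $L\triangleq N'/b$ is an integer, $r_d\triangleq K/N'$ satisfies $r_d b\in\mathbb{Z}$, and $D_{max}<L$ is a nonnegative integer. Transmit a codeword $\mathbf{c}\in\mathcal{C}$ with the interleave/deinterleave transform (IDT) described in the context, over the channel $y[n]=x[n-\tau]+z[n]$ with integer delay $\tau\in\{0,\ldots,D_{max}\}$ (with $x[n]=0$ for $n\le 0$) and i.i.d. noise $z[n]\sim\mathcal{N}(0,1)$. Suppose the receiver does not compensate the delay, i.e. it applies CP removal and deinterleaving directly to the received sequence $\mathbf{y}$, which is a noisy version of $[0,\ldots,0,\mathbf{x}[1],\ldots,\mathbf{x}[b]]$ with $\tau$ leading zeros. Then the deinterleaver output equals $\tilde{\mathbf{x}}^{(b\tau)}+\tilde{\mathbf{z}}$, where $\tilde{\mathbf{x}}=\mathcal{M}(\mathbf{c})$ and $\tilde{\mathbf{z}}$ has i.i.d. $\mathcal{N}(0,1)$ entries; that is, the IDT transforms the received signal into a noisy version of the codeword circularly shifted by $b\tau$. Moreover, $\tilde{\mathbf{x}}^{(b\tau)}=\mathcal{M}(\mathbf{c}^{(b\tau)})$ with $\mathbf{c}^{(b\tau)}\in\mathcal{C}$, so one can directly decode $\mathbf{c}^{(b\tau)}$.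
   Context: For a vector $\mathbf{x}$ of length $n$, $\mathbf{x}^{(t)}$ denotes its right circular shift by $t$ positions (e.g. $[1,2,3,4]^{(1)}=[4,1,2,3]$). A linear code $\mathcal{C}$ of length $N'$ is $b$-quasi-cyclic ($b$-QC) if for every $\mathbf{c}\in\mathcal{C}$, $\mathbf{c}^{(bi)}\in\mathcal{C}$ for all integers $i$. The mapping $\mathcal{M}:\mathbb{F}_p\to\mathbb{R}$ (applied componentwise) is $\mathcal{M}(u)=u$ for $0\le u\le (p-1)/2$, $\mathcal{M}(u)=u-p$ for $(p-1)/2<u<p$ when $p\ge3$, and $\mathcal{M}(u)=u-1/2$ when $p=2$. IDT at the transmitter: (1) form $\tilde{\mathbf{x}}=\mathcal{M}(\mathbf{c})\in\mathbb{R}^{N'}$; (2) interleave: $\bar{\mathbf{x}}=[\bar{\mathbf{x}}[1],\ldots,\bar{\mathbf{x}}[b]]$ consists of $b$ sub-blocks of length $L$, where sub-block $s$ is $\bar{\mathbf{x}}[s]=(\tilde{x}[s],\tilde{x}[s+b],\ldots,\tilde{x}[s+(L-1)b])$ (write column-wise, transmit row-wise interleaver); (3) for each of the first $r_d b$ sub-blocks (which carry message symbols of the systematic encoder), the last $D_{max}$ symbols are frozen to zero and the sub-block is sent as is, $\mathbf{x}[s]=\bar{\mathbf{x}}[s]$; for each of the last $(1-r_d)b$ sub-blocks a cyclic prefix is prepended, $\mathbf{x}[s]=[\bar{x}^{L-D_{max}+1}[s],\ldots,\bar{x}^{L}[s],\bar{x}^1[s],\ldots,\bar{x}^L[s]]$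 (where $\bar x^{l}[s]$ is the $l$-th entry of $\bar{\mathbf{x}}[s]$); the transmitted signal is $\mathbf{x}=[\mathbf{x}[1],\ldots,\mathbf{x}[b]]$, of length $N'+(1-r_d)bD_{max}$. At the receiver: CP removal discards the received samples at the positions where the cyclic prefixes are located in the undelayed frame and keeps the $b$ length-$L$ windows at the positions of the sub-blocks $\bar{\mathbf{x}}[s]$, giving $\bar{\mathbf{y}}=[\bar{\mathbf{y}}[1],\ldots,\bar{\mathbf{y}}[b]]$; the deinterleaver is the inverse of step (2), i.e. $\tilde{y}[s+(l-1)b]$ is the $l$-th entry of $\bar{\mathbf{y}}[s]$. *)

theory Defs
  imports "HOL-Probability.Probability" "Berlekamp_Zassenhaus.Finite_Field"
begin

text \<open>Conventions: all vectors are 0-based. A length-N vector is a function nat => 'a,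
  only indices below N are meaningful. Time indices of the channel are integers.\<close>

definition cshift :: "nat \<Rightarrow> int \<Rightarrow> (nat \<Rightarrow> 'a::zero) \<Rightarrow> nat \<Rightarrow> 'a" where
  "cshift N t x n = (if n < N then x (nat ((int n - t) mod int N)) else 0)"

definition is_QC :: "nat \<Rightarrow> nat \<Rightarrow> (nat \<Rightarrow> 'a::zero) set \<Rightarrow> bool" where
  "is_QC N b C = (\<forall>c\<in>C. \<forall>i::int. cshift N (int b * i) c \<in> C)"

definition sys_linear_code :: "nat \<Rightarrow> nat \<Rightarrow> (nat \<Rightarrow> 'f::field) set \<Rightarrow> bool" where
  "sys_linear_code N K C =
     (\<exists>G :: nat \<Rightarrow> nat \<Rightarrow> 'f.
        (\<exists>J. inj_on J {..<K} \<and> J ` {..<K} \<subseteq> {..<N} \<and>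
             (\<forall>i<K. \<forall>k<K. G i (J k) = (if i = k then 1 else 0))) \<and>
        C = {c. \<exists>m :: nat \<Rightarrow> 'f. c = (\<lambda>j. if j < N then (\<Sum>i<K. m i * G i j) else 0)})"

definition Mmap :: "'p::prime_card mod_ring \<Rightarrow> real" where
  "Mmap u = (let p = int CARD('p); v = to_int_mod_ring u in
     if p = 2 then real_of_int v - 1/2
     else if 2 * v \<le> p - 1 then real_of_int v else real_of_int (v - p))"

definition interleave :: "nat \<Rightarrow> (nat \<Rightarrow> real) \<Rightarrow> nat \<Rightarrow> nat \<Rightarrow> real" where
  "interleave b xt s l = xt (s + l * b)"

text \<open>Transmitted frame (time index n, 0-based, zero outside the frame): the first kb = r_d b
  sub-blocks are sent as is (length L each), each of the remaining b - kb sub-blocks is sent with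
  a cyclic prefix of length D (the last D entries of the sub-block), total length L + D.\<close>
definition tx_frame :: "nat \<Rightarrow> nat \<Rightarrow> nat \<Rightarrow> nat \<Rightarrow> (nat \<Rightarrow> real) \<Rightarrow> int \<Rightarrow> real" where
  "tx_frame b L kb D xt n =
     (if 0 \<le> n \<and> n < int (kb * L) then interleave b xt (nat n div L) (nat n mod L)
      else if int (kb * L) \<le> n \<and> n < int (kb * L + (b - kb) * (L + D)) then
        (let m = nat (n - int (kb * L)); s = kb + m div (L + D); j = m mod (L + D) in
           if j < D then interleave b xt s (L - D + j) else interleave b xt s (j - D))
      else 0)"

text \<open>Start position (in the undelayed frame) of sub-block s without its cyclic prefix.\<close>
definition sub_start :: "nat \<Rightarrow> nat \<Rightarrow> nat \<Rightarrow> nat \<Rightarrow> nat" where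
  "sub_start L kb D s = (if s < kb then s * L else kb * L + (s - kb) * (L + D) + D)"

text \<open>CP removal followed by deinterleaving: output entry s + l b (s < b, l < L) is the l-th
  sample of the length-L window located at the position of sub-block s.\<close>
definition cp_remove_deint :: "nat \<Rightarrow> nat \<Rightarrow> nat \<Rightarrow> nat \<Rightarrow> (int \<Rightarrow> real) \<Rightarrow> nat \<Rightarrow> real" where
  "cp_remove_deint b L kb D y n = y (int (sub_start L kb D (n mod b) + n div b))"

end

theory Submission
  imports Defs
begin

lemma (in prob_space) indep_sets_reindex:
  assumes inj: "inj_on g I" and ind: "indep_sets F (g ` I)"
  shows "indep_sets (\<lambda>i. F (g i)) I"
  unfolding indep_sets_def
proof (intro conjI ballI allI impI)
  fix i assume "i \<in> I" then show "F (g i) \<subseteq> events" using ind by (auto simp: indep_sets_def)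
next
  fix J A assume J: "J \<subseteq> I" "J \<noteq> {}" "finite J" and A: "A \<in> Pi J (\<lambda>i. F (g i))"
  have injJ: "inj_on g J" using inj J(1) inj_on_subset by blast
  define A' where "A' = (\<lambda>k. A (the_inv_into J g k))"
  have A'g: "A' (g j) = A j" if "j \<in> J" for j
    using that injJ by (simp add: A'_def the_inv_into_f_f)
  have "A' \<in> Pi (g ` J) F" using A A'g by auto
  moreover have "g ` J \<subseteq> g ` I" "g ` J \<noteq> {}" "finite (g ` J)" using J by auto
  ultimately have "prob (\<Inter>k\<in>g ` J. A' k) = (\<Prod>k\<in>g ` J. prob (A' k))"
    using ind unfolding indep_sets_def by blast
  moreover have "(\<Inter>k\<in>g ` J. A' k) = (\<Inter>j\<in>J. A j)" using A'g by auto
  moreover have "(\<Prod>k\<in>g ` J. prob (A' k)) = (\<Prod>j\<in>J. prob (A j))"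
    using injJ A'g by (simp add: prod.reindex)
  ultimately show "prob (\<Inter>j\<in>J. A j) = (\<Prod>j\<in>J. prob (A j))" by simp
qed

lemma (in prob_space) indep_vars_reindex:
  assumes "inj_on g I" "indep_vars M' X (g ` I)"
  shows "indep_vars (\<lambda>i. M' (g i)) (\<lambda>i. X (g i)) I"
  using assms unfolding indep_vars_def2
  by (auto intro: indep_sets_reindex[where F="\<lambda>i. { X i -` A \<inter> space M | A. A \<in> sets (M' i)}"])


lemma cshift_eval:
  fixes xt :: "nat \<Rightarrow> 'a::zero"
  assumes "b > 0" "\<tau> \<le> L" "i < b * L"
  shows "cshift (b*L) (int (b*\<tau>)) xt i =
    (if \<tau> \<le> i div b then xt (i mod b + (i div b - \<tau>)*b) else xt (i mod b + (L + i div b - \<tau>)*b))"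
proof -
  define s l where "s = i mod b" and "l = i div b"
  have i: "i = s + l*b" using s_def l_def by simp
  have sb: "s < b" using assms s_def by simp
  have lL: "l < L" using assms l_def by (metis div_less_iff_less_mult mult.commute)
  have cs: "cshift (b*L) (int (b*\<tau>)) xt i = xt (nat ((int i - int (b*\<tau>)) mod int (b*L)))"
    unfolding cshift_def by (rule if_P[OF assms(3)])
  show ?thesis
  proof (cases "\<tau> \<le> l")
    case True
    have "l*b = (l-\<tau>)*b + \<tau>*b" using True by (simp add: add_mult_distrib[symmetric])
    then have "i = s + (l-\<tau>)*b + b*\<tau>" using i by simp
    then have "int i - int (b*\<tau>) = int (s + (l-\<tau>)*b)" by simp
    moreover have "s + (l-\<tau>)*b < b*L"
    proof -
      have "s + (l-\<tau>)*b < b + (l-\<tau>)*b" using sb by simp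
      also have "\<dots> = (l-\<tau>+1)*b" by simp
      also have "\<dots> \<le> L*b" using lL True by (intro mult_right_mono) auto
      finally show ?thesis by (simp add: mult.commute)
    qed
    ultimately have m: "(int i - int (b*\<tau>)) mod int (b*L) = int (s + (l-\<tau>)*b)"
      by (metis mod_pos_pos_trivial of_nat_0_le_iff of_nat_less_iff)
    show ?thesis using True unfolding cs m nat_int s_def[symmetric] l_def[symmetric] by simp
  next
    case False
    have "L*b + l*b = (L+l-\<tau>)*b + \<tau>*b" using False assms(2) by (simp add: add_mult_distrib[symmetric])
    then have "i + b*L = s + (L+l-\<tau>)*b + b*\<tau>" using i by (simp add: mult.commute)
    then have "int i + int (b*L) = int (s + (L+l-\<tau>)*b) + int (b*\<tau>)" by (metis of_nat_add)
    then have e: "int i - int (b*\<tau>) = int (s + (L+l-\<tau>)*b) - int (b*L)" by linarith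
    have lt: "s + (L+l-\<tau>)*b < b*L"
    proof -
      have "s + (L+l-\<tau>)*b < b + (L+l-\<tau>)*b" using sb by simp
      also have "\<dots> = (L+l-\<tau>+1)*b" by simp
      also have "\<dots> \<le> L*b" using lL False by (intro mult_right_mono) auto
      finally show ?thesis by (simp add: mult.commute)
    qed
    have m: "(int i - int (b*\<tau>)) mod int (b*L) = int (s + (L+l-\<tau>)*b)"
      unfolding e using lt by (simp add: minus_mod_self2 del: of_nat_mult of_nat_add)
    show ?thesis using False unfolding cs m nat_int s_def[symmetric] l_def[symmetric] by simp
  qed
qed


lemma tx1: assumes "N < kb*L" shows "tx_frame b L kb D xt (int N) = interleave b xt (N div L) (N mod L)"
proof -
  have "int N < int (kb*L)" using assms by (simp only: of_nat_less_iff)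
  then have "0 \<le> int N \<and> int N < int (kb * L)" by simp
  then show ?thesis unfolding tx_frame_def nat_int by (rule if_P)
qed

lemma tx0: assumes "n < 0" shows "tx_frame b L kb D xt n = 0"
proof -
  have "\<not> (0 \<le> n \<and> n < int (kb * L))" using assms by simp
  moreover have "\<not> (int (kb * L) \<le> n \<and> n < int (kb * L + (b - kb) * (L + D)))"
    using assms of_nat_0_le_iff[of "kb*L"] by linarith
  ultimately show ?thesis unfolding tx_frame_def by (simp only: if_False)
qed

lemma tx2: assumes "m < (b-kb)*(L+D)" shows "tx_frame b L kb D xt (int (kb*L + m)) =
   (if m mod (L+D) < D then interleave b xt (kb + m div (L+D)) (L - D + m mod (L+D))
    else interleave b xt (kb + m div (L+D)) (m mod (L+D) - D))"
proof -
  have a: "\<not> int (kb*L + m) < int (kb*L)" by simp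
  have b: "int (kb*L + m) < int (kb * L + (b - kb) * (L + D))" using assms by (simp only: of_nat_less_iff add_less_cancel_left)
  have c: "int (kb * L) \<le> int (kb*L + m)" by simp
  have e: "nat (int (kb*L + m) - int (kb * L)) = m" by simp
  show ?thesis unfolding tx_frame_def Let_def using a b c e by (simp only: if_False if_True simp_thms of_nat_0_le_iff)
qed

lemma tx_eval:
  fixes xt :: "nat \<Rightarrow> real"
  assumes "D < L" "\<tau> \<le> D" "kb \<le> b" "s < b" "l < L"
    and frozen: "\<forall>s<kb. \<forall>l. L - D \<le> l \<and> l < L \<longrightarrow> interleave b xt s l = 0"
  shows "tx_frame b L kb D xt (int (sub_start L kb D s + l) - int \<tau>) =
    (if \<tau> \<le> l then xt (s + (l - \<tau>)*b) else xt (s + (L + l - \<tau>)*b))"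
proof (cases "s < kb")
  case sk: True
  then have ss: "sub_start L kb D s = s*L" by (simp add: sub_start_def)
  show ?thesis
  proof (cases "\<tau> \<le> l")
    case True
    have n: "int (sub_start L kb D s + l) - int \<tau> = int (s*L + (l-\<tau>))" using True ss by simp
    have "s*L + (l-\<tau>) < s*L + L" using assms(5) by simp
    also have "\<dots> = (s+1)*L" by simp
    also have "\<dots> \<le> kb*L" using sk by (intro mult_right_mono) auto
    finally have lt: "s*L + (l-\<tau>) < kb*L" .
    have d: "(s*L + (l-\<tau>)) div L = s" and md: "(s*L + (l-\<tau>)) mod L = l - \<tau>"
      using assms(5) by auto
    show ?thesis unfolding n tx1[OF lt] d md using True by (simp add: interleave_def)
  next
    case False
    have r: "L - D \<le> L + l - \<tau>" "L + l - \<tau> < L" using False assms by arith+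
    have z: "xt (s + (L + l - \<tau>)*b) = 0" using frozen sk r
      unfolding interleave_def by blast
    show ?thesis
    proof (cases "s = 0")
      case True
      then have "int (sub_start L kb D s + l) - int \<tau> < 0" using ss False by simp
      then show ?thesis using False z by (simp add: tx0)
    next
      case s0: False
      have n: "int (sub_start L kb D s + l) - int \<tau> = int ((s-1)*L + (L+l-\<tau>))" 
      proof -
        have "s*L = (s-1)*L + L" using s0 by (metis add.commute mult_Suc Suc_pred' gr0I)
        moreover have "\<tau> \<le> L + l" using assms by arith
        ultimately show ?thesis using ss False by (simp add: of_nat_diff)
      qed
      have "(s-1)*L + (L+l-\<tau>) < (s-1)*L + L" using r by simp
      also have "\<dots> = s*L" using s0 by (metis add.commute mult_Suc Suc_pred' gr0I)
      also have "\<dots> \<le> kb*L" using sk by (intro mult_right_mono) auto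
      finally have lt: "(s-1)*L + (L+l-\<tau>) < kb*L" .
      have d: "((s-1)*L + (L+l-\<tau>)) div L = s - 1" and md: "((s-1)*L + (L+l-\<tau>)) mod L = L + l - \<tau>"
        using r by auto
      have z2: "interleave b xt (s-1) (L+l-\<tau>) = 0" using frozen sk r by (meson less_imp_diff_less)
      show ?thesis unfolding n tx1[OF lt] d md using False z z2 by simp
    qed
  qed
next
  case sk: False
  then have ss: "sub_start L kb D s = kb*L + (s-kb)*(L+D) + D" by (simp add: sub_start_def)
  define m where "m = (s-kb)*(L+D) + (D+l-\<tau>)"
  have n: "int (sub_start L kb D s + l) - int \<tau> = int (kb*L + m)"
    using ss assms(2) unfolding m_def by simp
  have "m < (s-kb)*(L+D) + (L+D)" using assms unfolding m_def by simp
  also have "\<dots> = (s-kb+1)*(L+D)" by simp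
  also have "\<dots> \<le> (b-kb)*(L+D)" using assms sk by (intro mult_right_mono) auto
  finally have lt: "m < (b-kb)*(L+D)" .
  have r: "D+l-\<tau> < L+D" using assms by arith
  have mm: "m = (D+l-\<tau>) + (s-kb)*(L+D)" unfolding m_def by (rule add.commute)
  have d: "m div (L+D) = s - kb" and md: "m mod (L+D) = D+l-\<tau>"
    using r assms(1) unfolding mm by (simp_all del: add_diff_assoc)
  have s': "kb + (s - kb) = s" using sk by simp
  have nm: "nat (int (kb*L + m) - int (kb*L)) = m" by simp
  have "tx_frame b L kb D xt (int (kb*L + m)) =
     (if D+l-\<tau> < D then interleave b xt s (L - D + (D+l-\<tau>)) else interleave b xt s (D+l-\<tau> - D))"
    unfolding tx2[OF lt] d md s' ..
  also have "\<dots> = (if \<tau> \<le> l then xt (s + (l - \<tau>)*b) else xt (s + (L + l - \<tau>)*b))"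
    using assms by (auto simp: interleave_def)
  finally show ?thesis unfolding n .
qed


lemma sub_start_gap:
  assumes "s < s'"
  shows "sub_start L kb D s + L \<le> sub_start L kb D s'"
proof (cases "s' < kb")
  case True
  then have "s < kb" using assms by simp
  moreover have "s*L + L \<le> s'*L" using assms
    by (metis Suc_leI add.commute mult_Suc mult_le_cancel2)
  ultimately show ?thesis using True by (simp add: sub_start_def)
next
  case F: False
  show ?thesis
  proof (cases "s < kb")
    case True
    have "s*L + L \<le> kb*L" using True
      by (metis Suc_leI add.commute mult_Suc mult_le_cancel2)
    then show ?thesis using True F by (simp add: sub_start_def)
  next
    case False
    have "(s-kb)*(L+D) + (L+D) \<le> (s'-kb)*(L+D)"
    proof -
      have "Suc (s-kb) \<le> s'-kb" using False assms by arith
      then show ?thesis by (metis add.commute mult_Suc mult_le_cancel2)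
    qed
    then show ?thesis using False F by (simp add: sub_start_def)
  qed
qed

lemma sub_start_inj:
  assumes "b > 0"
  shows "inj_on (\<lambda>i. int (sub_start L kb D (i mod b) + i div b)) {..<b*L}"
proof (rule inj_onI)
  fix i j assume i: "i \<in> {..<b*L}" and j: "j \<in> {..<b*L}"
    and e: "int (sub_start L kb D (i mod b) + i div b) = int (sub_start L kb D (j mod b) + j div b)"
  have il: "i div b < L" using i assms by (simp add: div_less_iff_less_mult mult.commute)
  have jl: "j div b < L" using j assms by (simp add: div_less_iff_less_mult mult.commute)
  have e': "sub_start L kb D (i mod b) + i div b = sub_start L kb D (j mod b) + j div b" using e by simp
  have sm: "i mod b = j mod b"
  proof (rule ccontr)
    assume "i mod b \<noteq> j mod b"
    then consider "i mod b < j mod b" | "j mod b < i mod b" by linarith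
    then show False
    proof cases
      case 1 from sub_start_gap[OF 1, of L kb D] il e' show False by linarith
    next
      case 2 from sub_start_gap[OF 2, of L kb D] jl e' show False by linarith
    qed
  qed
  then have "i div b = j div b" using e' by simp
  then show "i = j" using sm by (metis div_mult_mod_eq)
qed



theorem lemma6:
  fixes P :: "'w measure"
    and C :: "(nat \<Rightarrow> 'p::prime_card mod_ring) set"
    and c :: "nat \<Rightarrow> 'p mod_ring"
    and b L kb D N' K \<tau> :: nat
    and z :: "int \<Rightarrow> 'w \<Rightarrow> real"
  assumes "prob_space P"
    and "b > 0" and "N' = b * L"
    and "K = kb * L" and "kb \<le> b"
    and "sys_linear_code N' K C"
    and "is_QC N' b C"
    and "D < L" and "\<tau> \<le> D"
    and "c \<in> C"
    and frozen: "\<forall>s<kb. \<forall>l. L - D \<le> l \<and> l < L \<longrightarrow> interleave b (\<lambda>n. Mmap (c n)) s l = 0"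
    and noise_indep: "prob_space.indep_vars P (\<lambda>_. borel) z UNIV"
    and noise_distr: "\<forall>n. distributed P lborel (z n) (\<lambda>x. ennreal (std_normal_density x))"
  shows "\<exists>zt :: nat \<Rightarrow> 'w \<Rightarrow> real.
           (\<forall>\<omega>. \<forall>i<N'.
              cp_remove_deint b L kb D
                (\<lambda>n. tx_frame b L kb D (\<lambda>k. Mmap (c k)) (n - int \<tau>) + z n \<omega>) i
              = cshift N' (int (b * \<tau>)) (\<lambda>k. Mmap (c k)) i + zt i \<omega>)
         \<and> prob_space.indep_vars P (\<lambda>_. borel) zt {..<N'}
         \<and> (\<forall>i<N'. distributed P lborel (zt i) (\<lambda>x. ennreal (std_normal_density x)))
         \<and> (\<forall>i<N'. cshift N' (int (b * \<tau>)) (\<lambda>k. Mmap (c k)) i = Mmap (cshift N' (int (b * \<tau>)) c i))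
         \<and> cshift N' (int (b * \<tau>)) c \<in> C"
  proof -
  let ?xt = "\<lambda>k. Mmap (c k)"
  define g where "g = (\<lambda>i. int (sub_start L kb D (i mod b) + i div b))"
  define zt where "zt = (\<lambda>i. z (g i))"
  have ps: "prob_space P" by fact
  have c1: "cp_remove_deint b L kb D
                (\<lambda>n. tx_frame b L kb D ?xt (n - int \<tau>) + z n \<omega>) i
              = cshift N' (int (b * \<tau>)) ?xt i + zt i \<omega>" if i: "i < N'" for \<omega> i
  proof -
    have il: "i div b < L" using i assms by (simp add: div_less_iff_less_mult mult.commute)
    have sb: "i mod b < b" using assms by simp
    have "cp_remove_deint b L kb D (\<lambda>n. tx_frame b L kb D ?xt (n - int \<tau>) + z n \<omega>) i
        = tx_frame b L kb D ?xt (int (sub_start L kb D (i mod b) + i div b) - int \<tau>) + zt i \<omega>"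
      by (simp add: cp_remove_deint_def zt_def g_def)
    also have "\<dots> = cshift N' (int (b * \<tau>)) ?xt i + zt i \<omega>"
      using tx_eval[OF assms(8,9,5) sb il assms(11)] cshift_eval[of b \<tau> L i ?xt] assms i
      by simp
    finally show ?thesis .
  qed
  have c2: "prob_space.indep_vars P (\<lambda>_. borel) zt {..<N'}"
  proof -
    have "prob_space.indep_vars P (\<lambda>_. borel) z (g ` {..<N'})"
      using prob_space.indep_vars_subset[OF ps assms(12)] by blast
    from prob_space.indep_vars_reindex[OF ps _ this] sub_start_inj[OF assms(2), of L kb D] assms(3)
    show ?thesis unfolding zt_def g_def by simp
  qed
  have c3: "\<forall>i<N'. distributed P lborel (zt i) (\<lambda>x. ennreal (std_normal_density x))"
    using assms(13) unfolding zt_def by simp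
  have c4: "\<forall>i<N'. cshift N' (int (b * \<tau>)) ?xt i = Mmap (cshift N' (int (b * \<tau>)) c i)"
    by (simp add: cshift_def)
  have c5: "cshift N' (int (b * \<tau>)) c \<in> C"
    using assms(7,10) unfolding is_QC_def by (metis of_nat_mult)
  show ?thesis using c1 c2 c3 c4 c5 by blast
qed

end
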